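(* Let $n\ge1$, $D\ge1$, and let $X_n=\{\mathbf{x}^0,\ldots,\mathbf{x}^{n-1}\}\subseteq\{0,1\}^D$ consist of $n$ pairwise distinct vectors, indexed so that $\mathbf{a}\cdot\mathbf{x}^0<\cdots<\mathbf{a}\cdot\mathbf{x}^{n-1}$ for some $\mathbf{a}\in\mathbb{Z}^D$. Then there is a three-layer Boolean threshold network with layer sizes $D$, $n$, $D$ that is a perfect autoencoder for $X_n$, with the second layer as middle layer.
   Context: A Boolean threshold function is a map $\{0,1\}^h\to\{0,1\}$, $\mathbf{u}\mapsto[\mathbf{w}\cdot\mathbf{u}\ge\theta]$ (value $1$ iff $\mathbf{w}\cdot\mathbf{u}\ge\theta$) with $\mathbf{w}\in\mathbb{Z}^h,\theta\in\mathbb{Z}$. An $L$-layer Boolean threshold network has layers $1,\ldots,L$; layer $1$ is the input; each node of layer $t+1$ computes a Boolean threshold function of the values of layer $t$. If layer $k$ is designated the middle layer, the encoder $\mathbf{f}$ is the map from layer $1$ values to layer $k$ values and the decoder $\mathbf{g}$ the map from layer $k$ values to layer $L$ values; the network is a perfect autoencoder for $X_n$ if $\mathbf{g}(\mathbf{f}(\mathbf{x}^i))=\mathbf{x}^i$ for all $i$. *)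

theory Defs
  imports Main
begin

text \<open>Boolean vectors in {0,1}^h are represented as functions nat \<Rightarrow> bool,
  where only coordinates 0..h-1 matter; we call u a vector of length h if it is
  False outside {0..<h} (so that equality of vectors is plain equality).\<close>

definition bvec :: "nat \<Rightarrow> (nat \<Rightarrow> bool) \<Rightarrow> bool" where
  "bvec h u \<longleftrightarrow> (\<forall>i\<ge>h. \<not> u i)"

definition bval :: "bool \<Rightarrow> int" where
  "bval b = (if b then 1 else 0)"

definition threshold_fun :: "nat \<Rightarrow> (nat \<Rightarrow> int) \<Rightarrow> int \<Rightarrow> (nat \<Rightarrow> bool) \<Rightarrow> bool" where
  "threshold_fun h w \<theta> u \<longleftrightarrow> (\<Sum>i<h. w i * bval (u i)) \<ge> \<theta>"

definition threshold_layer ::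
  "nat \<Rightarrow> nat \<Rightarrow> (nat \<Rightarrow> nat \<Rightarrow> int) \<Rightarrow> (nat \<Rightarrow> int) \<Rightarrow> (nat \<Rightarrow> bool) \<Rightarrow> (nat \<Rightarrow> bool)" where
  "threshold_layer h m W \<Theta> u = (\<lambda>j. j < m \<and> threshold_fun h (W j) (\<Theta> j) u)"

definition perfect_autoencoder_3layer ::
  "nat \<Rightarrow> nat \<Rightarrow> (nat \<Rightarrow> nat \<Rightarrow> int) \<Rightarrow> (nat \<Rightarrow> int) \<Rightarrow> (nat \<Rightarrow> nat \<Rightarrow> int) \<Rightarrow> (nat \<Rightarrow> int)
     \<Rightarrow> (nat \<Rightarrow> nat \<Rightarrow> bool) \<Rightarrow> bool" where
  "perfect_autoencoder_3layer D n W1 \<Theta>1 W2 \<Theta>2 x \<longleftrightarrow>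
     (\<forall>i<n. threshold_layer n D W2 \<Theta>2 (threshold_layer D n W1 \<Theta>1 (x i)) = x i)"

end

theory Submission
  imports Defs
begin

lemma telescope:
  fixes f :: "nat \<Rightarrow> int"
  shows "(\<Sum>j\<le>i. (if j = 0 then f 0 else f j - f (j - 1))) = f i"
  by (induction i) auto

lemma sum_thermo:
  fixes d :: "nat \<Rightarrow> int"
  assumes "i < n"
  shows "(\<Sum>j<n. d j * bval (j \<le> i)) = (\<Sum>j\<le>i. d j)"
proof -
  have "(\<Sum>j<n. d j * bval (j \<le> i)) = (\<Sum>j\<in>{..<n}. if j \<le> i then d j else 0)"
    by (rule sum.cong) (auto simp: bval_def)
  also have "\<dots> = (\<Sum>j\<in>{..<n} \<inter> {j. j \<le> i}. d j)"
    by (simp add: sum.inter_restrict)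
  also have "{..<n} \<inter> {j. j \<le> i} = {..i}" using assms by auto
  finally show ?thesis by simp
qed

theorem theorem18:
  fixes n D :: nat and x :: "nat \<Rightarrow> nat \<Rightarrow> bool" and a :: "nat \<Rightarrow> int"
  assumes "n \<ge> 1" and "D \<ge> 1"
    and "\<forall>i<n. bvec D (x i)"
    and "\<forall>i<n. \<forall>j<n. i \<noteq> j \<longrightarrow> x i \<noteq> x j"
    and "\<forall>i j. i < j \<and> j < n \<longrightarrow>
           (\<Sum>k<D. a k * bval (x i k)) < (\<Sum>k<D. a k * bval (x j k))"
  shows "\<exists>W1 \<Theta>1 W2 \<Theta>2. perfect_autoencoder_3layer D n W1 \<Theta>1 W2 \<Theta>2 x"
proof -
  define s where "s i = (\<Sum>k<D. a k * bval (x i k))" for i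
  define W2 where "W2 k j = (if j = 0 then bval (x 0 k) else bval (x j k) - bval (x (j - 1) k))" for k j
  have mono: "s i < s j" if "i < j" "j < n" for i j
    using assms(5) that unfolding s_def by blast
  have enc: "threshold_layer D n (\<lambda>_. a) s (x i) = (\<lambda>j. j \<le> i)" if "i < n" for i
  proof
    fix j
    have "(j < n \<and> s i \<ge> s j) = (j \<le> i)"
    proof (cases "j \<le> i")
      case True
      then show ?thesis using that mono[of j i] by (cases "j = i") auto
    next
      case False
      then show ?thesis using mono[of i j] by auto
    qed
    then show "threshold_layer D n (\<lambda>_. a) s (x i) j = (j \<le> i)"
      unfolding threshold_layer_def threshold_fun_def s_def by simp
  qed
  have "perfect_autoencoder_3layer D n (\<lambda>_. a) s W2 (\<lambda>_. 1) x"
    unfolding perfect_autoencoder_3layer_def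
  proof (intro allI impI)
    fix i assume i: "i < n"
    show "threshold_layer n D W2 (\<lambda>_. 1) (threshold_layer D n (\<lambda>_. a) s (x i)) = x i"
    proof
      fix k
      have "(\<Sum>j<n. W2 k j * bval (j \<le> i)) = bval (x i k)"
        unfolding sum_thermo[OF i] W2_def
        using telescope[of "\<lambda>j. bval (x j k)" i] by simp
      moreover have "k \<ge> D \<Longrightarrow> \<not> x i k" using assms(3) i unfolding bvec_def by auto
      ultimately show "threshold_layer n D W2 (\<lambda>_. 1) (threshold_layer D n (\<lambda>_. a) s (x i)) k = x i k"
        unfolding enc[OF i] by (auto simp: threshold_layer_def threshold_fun_def bval_def not_less[symmetric])
    qed
  qed
  then show ?thesis by blast
qed

end
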